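(* Let $p\ge 2$ and $d\in\{0,1,\dots,9\}$ be integers, and let $n\ge 10^{p-1}$ be an integer. Let $k=\max\{i\in\mathbb N:10^{i+p}\le n\}$, with $k=-1$ if this set is empty, and let $$l=\Big\lfloor\frac{n-(10^{p-1}+d)10^{k+1}}{10^{k+2}}\Big\rfloor+10^{p-2}.$$ Then \begin{align*} P_{(d,n,p)}=\frac{1}{n+1-10^{p-1}}\Big(&\sum_{i=0}^k\Big(\sum_{j=10^{p-2}}^{10^{p-1}-1}\ \sum_{b=(10j+d)10^i}^{(10j+(d+1))10^i-1}\frac{b-((9j+d)10^i+10^{p-2}-1)}{b+1-10^{p-1}}\\ &+\sum_{j=10^{p-2}-1}^{10^{p-1}-1}\ \sum_{a=\max(10^{p+i-1},(10j+(d+1))10^i)}^{\min(10^{p+i}-1,(10(j+1)+d)10^i-1)}\frac{10^i(j+1)-10^{p-2}}{a+1-10^{p-1}}\Big)+ r_{(n,d,p)}\Big), \end{align*} where, if the $p$-th digit of $n$ is $d$, \begin{align*} r_{(n,d,p)}=&\sum_{j=10^{p-2}}^{l}\ \sum_{b=(10j+d)10^{k+1}}^{\min(n,(10j+(d+1))10^{k+1}-1)}\frac{b-((9j+d)10^{k+1}+10^{p-2}-1)}{b+1-10^{p-1}}\\ &+\sum_{j=10^{p-2}-1}^{l-1}\ \sum_{a=\max(10^{p+k},(10j+(d+1))10^{k+1})}^{(10(j+1)+d)10^{k+1}-1}\frac{10^{k+1}(j+1)-10^{p-2}}{a+1-10^{p-1}}, \end{align*} and, if the $p$-th digit of $n$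 is different from $d$, \begin{align*} r_{(n,d,p)}=&\sum_{j=10^{p-2}}^{l}\ \sum_{b=(10j+d)10^{k+1}}^{(10j+(d+1))10^{k+1}-1}\frac{b-((9j+d)10^{k+1}+10^{p-2}-1)}{b+1-10^{p-1}}\\ &+\sum_{j=10^{p-2}-1}^{l}\ \sum_{a=\max(10^{p+k},(10j+(d+1))10^{k+1})}^{\min(n,(10(j+1)+d)10^{k+1}-1)}\frac{10^{k+1}(j+1)-10^{p-2}}{a+1-10^{p-1}}. \end{align*}
   Context: For an integer $x\ge 10^{p-1}$ (so $x$ has at least $p$ decimal digits), the "$p$-th digit of $x$" is the $p$-th digit of its decimal expansion counted from the left (most significant digit first). For integers $p\ge2$, $d\in\{0,\dots,9\}$ and $m\ge 10^{p-1}$, let $N_d(m)$ be the number of integers $x$ with $10^{p-1}\le x\le m$ whose $p$-th digit is $d$. For $n\ge 10^{p-1}$ the model is the two-stage random experiment: first choose $m$ uniformly at random in $\{10^{p-1},\dots,n\}$, then choose $x$ uniformly at random in $\{10^{p-1},\dots,m\}$. $P_{(d,n,p)}$ denotes the probability that the $p$-th digit of $x$ is $d$, i.e. $$P_{(d,n,p)}=\frac{1}{n+1-10^{p-1}}\sum_{m=10^{p-1}}^{n}\frac{N_d(m)}{m+1-10^{p-1}}.$$ Sums whose upper index is smaller than the lower index (e.g. $\sum_{i=0}^{-1}$) are zero. *)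

theory Defs
  imports Complex_Main
begin

definition ndigits :: "nat \<Rightarrow> nat" where
  "ndigits x = (LEAST L. x < 10 ^ L)"

definition pth_digit :: "nat \<Rightarrow> nat \<Rightarrow> nat" where
  "pth_digit p x = (x div 10 ^ (ndigits x - p)) mod 10"

definition Ncount :: "nat \<Rightarrow> nat \<Rightarrow> nat \<Rightarrow> nat" where
  "Ncount p d m = card {x. 10 ^ (p - 1) \<le> x \<and> x \<le> m \<and> pth_digit p x = d}"

definition Pprob :: "nat \<Rightarrow> nat \<Rightarrow> nat \<Rightarrow> real" where
  "Pprob d n p = (1 / (real n + 1 - 10 ^ (p - 1))) *
     (\<Sum>m = 10 ^ (p - 1)..n. real (Ncount p d m) / (real m + 1 - 10 ^ (p - 1)))"

end

theory Submission
  imports Defs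
begin

lemma div_ge_iff: fixes x A T :: int assumes "T > 0" shows "(A \<le> x div T) = (A * T \<le> x)"
  using assms by (smt (verit) minus_mult_div_eq_mod mult.commute
    nonzero_mult_div_cancel_right pos_mod_sign zdiv_mono1)

lemma div_le_iff2: fixes x B T :: int assumes "T > 0" shows "(x div T \<le> B) = (x \<le> (B+1) * T - 1)"
  using div_ge_iff[OF assms, of "B+1" x] by linarith

lemma pres1: fixes q j e :: int assumes "0 \<le> e" "e \<le> 9"
  shows "(q mod 10 = e \<and> q div 10 = j) \<longleftrightarrow> (10*j+e \<le> q \<and> q \<le> 10*j+e)"
proof
  assume "q mod 10 = e \<and> q div 10 = j"
  thus "10*j+e \<le> q \<and> q \<le> 10*j+e" using div_mult_mod_eq[of q 10] by auto
next
  assume "10*j+e \<le> q \<and> q \<le> 10*j+e"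
  hence qq: "q = e + j*10" by simp
  have e0: "e div 10 = 0" "e mod 10 = e" using assms by (auto intro: div_pos_pos_trivial mod_pos_pos_trivial)
  have "q div 10 = e div 10 + j" unfolding qq by simp
  moreover have "q mod 10 = e mod 10" unfolding qq by simp
  ultimately show "q mod 10 = e \<and> q div 10 = j" using e0 by simp
qed

lemma pres3: fixes q c e :: int assumes "0 \<le> e" "e \<le> 9" "10*c \<le> q" "q \<le> 100*c - 1"
  shows "c - 1 \<le> (q - e - 1) div 10 \<and> (q - e - 1) div 10 \<le> 10*c-1"
  using assms div_ge_iff[of 10 "c-1" "q-e-1"] div_le_iff2[of 10 "q-e-1" "10*c-1"] by simp

lemma pres2: fixes q j e :: int assumes "0 \<le> e" "e \<le> 9"
  shows "(q mod 10 \<noteq> e \<and> (q - e - 1) div 10 = j) \<longleftrightarrow> (10*j+e + 1 \<le> q \<and> q \<le> 10*j+e + 9)"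
proof -
  have a: "(q - e - 1) div 10 = j \<longleftrightarrow> (10*j+e + 1 \<le> q \<and> q \<le> 10*j+e + 10)"
    using div_ge_iff[of 10 j "q-e-1"] div_le_iff2[of 10 "q-e-1" j] by (auto simp: algebra_simps)
  have b: "q mod 10 = e \<longleftrightarrow> q = 10*(q div 10) + e"
    using div_mult_mod_eq[of q 10] by linarith
  have c: "(10*j+e + 1 \<le> q \<and> q \<le> 10*j+e + 10) \<Longrightarrow> q = 10*(q div 10) + e \<longleftrightarrow> q = 10*j+e+10"
  proof -
    assume h: "10*j+e + 1 \<le> q \<and> q \<le> 10*j+e + 10"
    have A1: "a = j+1" if "q = 10*a + e" for a using h that by presburger
    have A2: "q div 10 = j + 1" if qq: "q = 10*j+e+10"
    proof -
      have e0: "e div 10 = 0" using assms by (intro div_pos_pos_trivial) auto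
      have "q = e + (j+1)*10" using qq by simp
      hence "q div 10 = e div 10 + (j+1)" by simp
      thus ?thesis using e0 by simp
    qed
    show ?thesis
    proof
      assume "q = 10*(q div 10) + e"
      hence "q div 10 = j+1" using A1 by blast
      thus "q = 10*j+e+10" using \<open>q = 10*(q div 10) + e\<close> by simp
    next
      assume "q = 10*j+e+10"
      thus "q = 10*(q div 10) + e" using A2 by simp
    qed
  qed
  show ?thesis using a b c by auto
qed
lemma level_split:
  fixes g :: "int \<Rightarrow> 'a::comm_monoid_add" and c T U :: int and d :: nat
  assumes c: "c > 0" and T: "T > 0" and d: "d \<le> 9" and U1: "10*c*T - 1 \<le> U" and U2: "U \<le> 100*c*T - 1"
  shows "sum g {10*c*T..U} =
     (\<Sum>j\<in>{c..10*c-1}. \<Sum>b\<in>{(10*j+int d)*T..min U ((10*j+(int d+1))*T-1)}. g b)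
   + (\<Sum>j\<in>{c-1..10*c-1}. \<Sum>a\<in>{max (10*c*T) ((10*j+(int d+1))*T)..min U ((10*(j+1)+int d)*T-1)}. g a)"
proof -
  define S where "S = {10*c*T..U}"
  define A where "A = {x\<in>S. x div T mod 10 = int d}"
  define B where "B = {x\<in>S. x div T mod 10 \<noteq> int d}"
  have fin: "finite A" "finite B" unfolding A_def B_def S_def by (rule finite_subset[of _ "{10*c*T..U}"], auto)+
  have "S = A \<union> B" "A \<inter> B = {}" unfolding A_def B_def by auto
  hence 1: "sum g S = sum g A + sum g B" using fin by (simp add: sum.union_disjoint)
  have qb: "10*c \<le> x div T \<and> x div T \<le> 100*c - 1" if "x \<in> S" for x
  proof -
    have x: "10*c*T \<le> x" "x \<le> (100*c - 1 + 1)*T - 1" using that U2 unfolding S_def by (auto simp: algebra_simps)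
    show ?thesis using div_ge_iff[OF T, of "10*c" x] div_le_iff2[OF T, of x "100*c-1"] x by (simp add: algebra_simps)
  qed
  have 2: "sum g A = (\<Sum>j\<in>{c..10*c-1}. \<Sum>b\<in>{(10*j+int d)*T..min U ((10*j+(int d+1))*T-1)}. g b)"
  proof -
    have im: "(\<lambda>x. x div T div 10) ` A \<subseteq> {c..10*c-1}"
    proof
      fix y assume "y \<in> (\<lambda>x. x div T div 10) ` A"
      then obtain x where x: "x \<in> S" "y = x div T div 10" unfolding A_def by auto
      from qb[OF x(1)] x(2) show "y \<in> {c..10*c-1}" by auto
    qed
    have fib: "{x. x \<in> A \<and> x div T div 10 = j} = {(10*j+int d)*T..min U ((10*j+(int d+1))*T-1)}"
      if j: "j \<in> {c..10*c-1}" for j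
    proof -
      have "x \<in> A \<and> x div T div 10 = j \<longleftrightarrow> x \<in> {(10*j+int d)*T..min U ((10*j+(int d+1))*T-1)}" for x
      proof -
        have e: "(x div T mod 10 = int d \<and> x div T div 10 = j) \<longleftrightarrow> (10*j+int d \<le> x div T \<and> x div T \<le> 10*j+int d)"
          using pres1[of "int d" "x div T" j] d by simp
        have "10*c*T \<le> (10*j+int d)*T" using j T by (intro mult_right_mono) auto
        thus ?thesis unfolding A_def S_def using e div_ge_iff[OF T] div_le_iff2[OF T]
          by (auto simp: algebra_simps)
      qed
      thus ?thesis by blast
    qed
    show ?thesis
      using sum.group[OF fin(1) _ im, of g, symmetric] fib by (auto intro!: sum.cong)
  qed
  have 3: "sum g B = (\<Sum>j\<in>{c-1..10*c-1}. \<Sum>a\<in>{max (10*c*T) ((10*j+(int d+1))*T)..min U ((10*(j+1)+int d)*T-1)}. g a)"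
  proof -
    have im: "(\<lambda>x. (x div T - int d - 1) div 10) ` B \<subseteq> {c-1..10*c-1}"
    proof
      fix y assume "y \<in> (\<lambda>x. (x div T - int d - 1) div 10) ` B"
      then obtain x where x: "x \<in> S" "y = (x div T - int d - 1) div 10" unfolding B_def by auto
      from pres3[of "int d" c "x div T"] d qb[OF x(1)] x(2) show "y \<in> {c-1..10*c-1}" by auto
    qed
    have fib: "{x. x \<in> B \<and> (x div T - int d - 1) div 10 = j} = {max (10*c*T) ((10*j+(int d+1))*T)..min U ((10*(j+1)+int d)*T-1)}"
      if j: "j \<in> {c-1..10*c-1}" for j
    proof -
      have "x \<in> B \<and> (x div T - int d - 1) div 10 = j \<longleftrightarrow> x \<in> {max (10*c*T) ((10*j+(int d+1))*T)..min U ((10*(j+1)+int d)*T-1)}" for x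
      proof -
        have e: "(x div T mod 10 \<noteq> int d \<and> (x div T - int d - 1) div 10 = j) \<longleftrightarrow> (10*j+int d + 1 \<le> x div T \<and> x div T \<le> 10*j+int d + 9)"
          using pres2[of "int d" "x div T" j] d by simp
        have "(10*j+int d + 9 + 1)*T - 1 = (10*(j+1)+int d)*T-1" by (simp add: algebra_simps)
        thus ?thesis unfolding B_def S_def using e div_ge_iff[OF T] div_le_iff2[OF T]
          by (auto simp: algebra_simps)
      qed
      thus ?thesis by blast
    qed
    show ?thesis
      using sum.group[OF fin(2) _ im, of g, symmetric] fib by (auto intro!: sum.cong)
  qed
  show ?thesis using 1 2 3 unfolding S_def by simp
qed

definition Fc :: "int \<Rightarrow> int \<Rightarrow> int \<Rightarrow> int \<Rightarrow> int" where
 "Fc c T e m = (m div T div 10)*T - c + (if m div T mod 10 > e then T else if m div T mod 10 = e then m mod T + 1 else 0)"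

lemma qsucc: fixes q :: int
  shows "(q+1) div 10 = (if q mod 10 = 9 then q div 10 + 1 else q div 10) \<and>
         (q+1) mod 10 = (if q mod 10 = 9 then 0 else q mod 10 + 1)"
proof -
  define a where "a = q div 10"
  define b where "b = q mod 10"
  have qq: "q + 1 = (b + 1) + a*10" using div_mult_mod_eq[of q 10] unfolding a_def b_def by simp
  have b: "0 \<le> b" "b < 10" unfolding b_def by auto
  show ?thesis
  proof (cases "b = 9")
    case True
    hence "q + 1 = 0 + (a+1)*10" using qq by (simp add: algebra_simps)
    hence "(q+1) div 10 = a + 1" "(q+1) mod 10 = 0" by simp_all
    thus ?thesis using True unfolding a_def b_def by simp
  next
    case False
    hence b1: "b + 1 < 10" using b by simp
    have "(q+1) div 10 = (b+1) div 10 + a" "(q+1) mod 10 = (b+1) mod 10" unfolding qq by simp_all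
    moreover have "(b+1) div 10 = 0" "(b+1) mod 10 = b+1" using b b1 by (auto intro: div_pos_pos_trivial mod_pos_pos_trivial)
    ultimately show ?thesis using False unfolding a_def b_def by simp
  qed
qed

lemma msucc: fixes m T :: int assumes T: "T > 0"
  shows "(m+1) div T = (if m mod T + 1 = T then m div T + 1 else m div T) \<and>
         (m+1) mod T = (if m mod T + 1 = T then 0 else m mod T + 1)"
proof -
  define a where "a = m div T"
  define b where "b = m mod T"
  have qq: "m + 1 = (b + 1) + a*T" using div_mult_mod_eq[of m T] unfolding a_def b_def by simp
  have b: "0 \<le> b" "b < T" unfolding b_def using T by auto
  show ?thesis
  proof (cases "b + 1 = T")
    case True
    hence "m + 1 = 0 + (a+1)*T" using qq by (simp add: algebra_simps)
    hence "(m+1) div T = a + 1" "(m+1) mod T = 0" using T by simp_all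
    thus ?thesis using True unfolding a_def b_def by simp
  next
    case False
    hence b1: "b + 1 < T" using b by simp
    have "(m+1) div T = (b+1) div T + a" "(m+1) mod T = (b+1) mod T" unfolding qq using T by simp_all
    moreover have "(b+1) div T = 0" "(b+1) mod T = b+1" using b b1 by (auto intro: div_pos_pos_trivial mod_pos_pos_trivial)
    ultimately show ?thesis using False unfolding a_def b_def by simp
  qed
qed

lemma Fc_step: fixes c T e m :: int assumes T: "T > 0" and e: "0 \<le> e" "e \<le> 9"
  shows "Fc c T e (m+1) = Fc c T e m + (if (m+1) div T mod 10 = e then 1 else 0)"
proof -
  define q where "q = m div T"
  define r where "r = m mod T"
  have r: "0 \<le> r" "r < T" unfolding r_def using T by auto
  have qm: "0 \<le> q mod 10" "q mod 10 < 10" by auto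
  show ?thesis
  proof (cases "r + 1 = T")
    case True
    hence m1: "(m+1) div T = q + 1" "(m+1) mod T = 0" using msucc[OF T, of m] unfolding q_def r_def by auto
    show ?thesis
    proof (cases "q mod 10 = 9")
      case True
      thus ?thesis using m1 qsucc[of q] e \<open>r+1 = T\<close> unfolding Fc_def q_def[symmetric] r_def[symmetric]
        by (auto simp: algebra_simps)
    next
      case False
      thus ?thesis using m1 qsucc[of q] e \<open>r+1 = T\<close> qm unfolding Fc_def q_def[symmetric] r_def[symmetric]
        by (auto simp: algebra_simps)
    qed
  next
    case False
    hence m1: "(m+1) div T = q" "(m+1) mod T = r + 1" using msucc[OF T, of m] unfolding q_def r_def by auto
    show ?thesis using m1 unfolding Fc_def q_def[symmetric] r_def[symmetric] by auto
  qed
qed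

lemma ndigits_level: assumes "p \<ge> 1" "10^(p+i-1) \<le> x" "x < (10::nat)^(p+i)"
  shows "ndigits x = p + i"
  unfolding ndigits_def
proof (rule Least_equality)
  show "x < 10^(p+i)" by fact
  fix L assume "x < (10::nat)^L"
  show "p + i \<le> L"
  proof (rule ccontr)
    assume "\<not> p + i \<le> L"
    hence "L \<le> p + i - 1" by simp
    hence "(10::nat)^L \<le> 10^(p+i-1)" by (intro power_increasing) auto
    thus False using assms \<open>x < 10^L\<close> by linarith
  qed
qed

lemma pth_level: assumes "p \<ge> 1" "10^(p+i-1) \<le> x" "x < (10::nat)^(p+i)"
  shows "pth_digit p x = x div 10^i mod 10"
  unfolding pth_digit_def ndigits_level[OF assms] by simp

lemma Ncount_zero: assumes "m < 10^(p-1)" shows "Ncount p d m = 0"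
  unfolding Ncount_def using assms by auto

lemma Ncount_Suc: assumes "10^(p-1) \<le> Suc m"
  shows "Ncount p d (Suc m) = Ncount p d m + (if pth_digit p (Suc m) = d then 1 else 0)"
proof -
  have fin: "finite {x. 10 ^ (p - 1) \<le> x \<and> x \<le> m \<and> pth_digit p x = d}" by (rule finite_subset[of _ "{..m}"]) auto
  show ?thesis
  proof (cases "pth_digit p (Suc m) = d")
    case True
    hence "{x. 10 ^ (p - 1) \<le> x \<and> x \<le> Suc m \<and> pth_digit p x = d} = insert (Suc m) {x. 10 ^ (p - 1) \<le> x \<and> x \<le> m \<and> pth_digit p x = d}"
      using assms by auto
    thus ?thesis unfolding Ncount_def using True fin by simp
  next
    case False
    hence "{x. 10 ^ (p - 1) \<le> x \<and> x \<le> Suc m \<and> pth_digit p x = d} = {x. 10 ^ (p - 1) \<le> x \<and> x \<le> m \<and> pth_digit p x = d}"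
      using assms le_Suc_eq by auto
    thus ?thesis unfolding Ncount_def using False by simp
  qed
qed

lemma Ncount_closed:
  assumes p: "p \<ge> 2" and d: "d \<le> 9"
  shows "10^(p+i-1) \<le> m \<Longrightarrow> m < (10::nat)^(p+i) \<Longrightarrow>
         int (Ncount p d m) = Fc (10^(p-2)) (10^i) (int d) (int m)"
proof (induction m arbitrary: i)
  case 0
  have "(1::nat) \<le> 10^(p+i-1)" by simp
  thus ?case using 0 by simp
next
  case (Suc m)
  define c :: int where "c = 10^(p-2)"
  have c0: "c > 0" unfolding c_def by simp
  have pc: "(10::int)^(p-1) = 10*c"
  proof -
    have "p - 1 = Suc (p-2)" using p by simp
    thus ?thesis by (simp add: c_def)
  qed
  have pcn: "(10::nat)^(p-1) = 10*10^(p-2)"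
  proof -
    have "p - 1 = Suc (p-2)" using p by simp
    thus ?thesis by simp
  qed
  show ?case
  proof (cases "Suc m = 10^(p+i-1)")
    case True
    show ?thesis
    proof (cases i)
      case 0
      have sm: "int (Suc m) = 10*c" using True pc 0 unfolding c_def by (metis add.right_neutral of_nat_numeral of_nat_power)
      have mlt: "m < 10^(p-1)" using True 0 by simp
      have dig: "pth_digit p (Suc m) = 0"
      proof -
        have "pth_digit p (Suc m) = Suc m div 10^0 mod 10" using pth_level[of p 0 "Suc m"] True 0 p by simp
        also have "\<dots> = 0" using True 0 pcn by simp
        finally show ?thesis .
      qed
      have "int (Ncount p d (Suc m)) = (if d = 0 then 1 else 0)"
        using Ncount_Suc[of p m d] Ncount_zero[OF mlt] dig True 0 by auto
      moreover have "Fc c 1 (int d) (10*c) = (if d = 0 then 1 else 0)" unfolding Fc_def by auto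
      ultimately show ?thesis using sm 0 unfolding c_def by simp
    next
      case (Suc i')
      define T' :: int where "T' = 10^i'"
      have T'0: "T' > 0" unfolding T'_def by simp
      have lv: "10^(p+i'-1) \<le> m" "m < (10::nat)^(p+i')"
      proof -
        have "(10::nat)^(p+i'-1) < 10^(p+i')" by (rule power_strict_increasing) (use p in auto)
        moreover have "(10::nat)^(p+i') = Suc m" using True Suc by simp
        ultimately show "10^(p+i'-1) \<le> m" "m < (10::nat)^(p+i')" by auto
      qed
      have IH: "int (Ncount p d m) = Fc c T' (int d) (int m)" using Suc.IH[OF lv] unfolding c_def T'_def .
      have pe: "(10::int)^(p+i') = 100*c*T'"
      proof -
        have "p + i' = (p - 1) + Suc i'" using p by simp
        hence "(10::int)^(p+i') = 10^(p-1) * 10^(Suc i')" by (metis power_add)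
        thus ?thesis unfolding pc T'_def by simp
      qed
      have smi: "int (Suc m) = 100*c*T'" using True Suc pe by (metis add_Suc_right diff_Suc_1 of_nat_numeral of_nat_power add_Suc_shift)
      have mi: "int m = (100*c - 1)*T' + (T' - 1)" using smi by (simp add: algebra_simps)
      have mdiv: "int m div T' = 100*c - 1" "int m mod T' = T' - 1"
      proof -
        have "int m div T' = (T' - 1) div T' + (100*c - 1)" unfolding mi using T'0 by simp
        moreover have "(T'-1) div T' = 0" using T'0 by (intro div_pos_pos_trivial) auto
        ultimately show "int m div T' = 100*c - 1" by simp
        have "int m mod T' = (T' - 1) mod T'" unfolding mi using T'0 by simp
        moreover have "(T'-1) mod T' = T' - 1" using T'0 by (intro mod_pos_pos_trivial) auto
        ultimately show "int m mod T' = T' - 1" by simp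
      qed
      have q1: "(100*c - 1) div 10 = 10*c - 1" "(100*c-1) mod 10 = 9"
      proof -
        have e: "100*c - 1 = 9 + (10*c-1)*10" by simp
        show d1: "(100*c - 1) div 10 = 10*c - 1" unfolding e by simp
        show "(100*c-1) mod 10 = 9" using d1 div_mult_mod_eq[of "100*c-1" 10] by linarith
      qed
      have Fm: "Fc c T' (int d) (int m) = 10*c*T' - c"
        unfolding Fc_def mdiv q1 using d by (auto simp: algebra_simps)
      have dig: "pth_digit p (Suc m) = 0"
      proof -
        have "pth_digit p (Suc m) = Suc m div 10^i mod 10" using pth_level[of p i "Suc m"] Suc.prems p by simp
        hence "int (pth_digit p (Suc m)) = int (Suc m) div (10*T') mod 10" using Suc unfolding T'_def
          by (simp add: of_nat_div of_nat_mod)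
        also have "\<dots> = 0" unfolding smi using T'0 by simp
        finally show ?thesis by simp
      qed
      have le: "10^(p-1) \<le> Suc m"
      proof -
        have "(10::nat)^(p-1) \<le> 10^(p+i'-1)" by (rule power_increasing) auto
        from order_trans[OF this lv(1)] show ?thesis by simp
      qed
      have "int (Ncount p d (Suc m)) = 10*c*T' - c + (if d = 0 then 1 else 0)"
        using Ncount_Suc[OF le, of d] IH Fm dig by auto
      moreover have "Fc c (10*T') (int d) (100*c*T') = 10*c*T' - c + (if d = 0 then 1 else 0)"
        unfolding Fc_def using T'0 by (auto simp: algebra_simps)
      ultimately show ?thesis using smi Suc unfolding c_def T'_def by simp
    qed
  next
    case False
    hence lv: "10^(p+i-1) \<le> m" "m < (10::nat)^(p+i)" using Suc.prems by auto
    have IH: "int (Ncount p d m) = Fc (10^(p-2)) (10^i) (int d) (int m)" using Suc.IH[OF lv] .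
    have le: "10^(p-1) \<le> Suc m"
    proof -
      have "(10::nat)^(p-1) \<le> 10^(p+i-1)" by (rule power_increasing) auto
      from order_trans[OF this lv(1)] show ?thesis by simp
    qed
    have dig: "int (pth_digit p (Suc m)) = (1 + int m) div 10^i mod 10"
      using pth_level[of p i "Suc m"] Suc.prems p by (simp add: of_nat_div of_nat_mod)
    show ?thesis
      using Ncount_Suc[OF le, of d] IH Fc_step[of "10^i" "int d" "10^(p-2)" "int m"] d dig add.commute[of "int m" 1]
      by (auto split: if_splits)
  qed
qed

lemma mono_T: fixes x y T :: int assumes "x \<le> y" "T > 0" shows "x*T \<le> y*T"
  using assms by (simp add: mult_right_mono)

lemma range_lemma:
  fixes fB fA :: "int \<Rightarrow> int \<Rightarrow> real" and c T n l lo hi :: int and d :: nat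
  assumes c: "c > 0" and T: "T > 0" and d: "d \<le> 9" and lo: "lo = 10*c*T" and hi: "hi = 10*c - 1"
    and n1: "10*c*T \<le> n" and n2: "n \<le> 100*c*T - 1" and l: "l = (n - int d*T) div (10*T)"
  shows "n div T mod 10 = int d \<Longrightarrow>
     (\<Sum>j\<in>{c..hi}. \<Sum>b\<in>{(10*j+int d)*T..min n ((10*j+(int d+1))*T-1)}. fB j b)
   + (\<Sum>j\<in>{c-1..hi}. \<Sum>a\<in>{max lo ((10*j+(int d+1))*T)..min n ((10*(j+1)+int d)*T-1)}. fA j a)
   = (\<Sum>j\<in>{c..l}. \<Sum>b\<in>{(10*j+int d)*T..min n ((10*j+(int d+1))*T-1)}. fB j b)
   + (\<Sum>j\<in>{c-1..l-1}. \<Sum>a\<in>{max lo ((10*j+(int d+1))*T)..(10*(j+1)+int d)*T-1}. fA j a)"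
  and "n div T mod 10 \<noteq> int d \<Longrightarrow>
     (\<Sum>j\<in>{c..hi}. \<Sum>b\<in>{(10*j+int d)*T..min n ((10*j+(int d+1))*T-1)}. fB j b)
   + (\<Sum>j\<in>{c-1..hi}. \<Sum>a\<in>{max lo ((10*j+(int d+1))*T)..min n ((10*(j+1)+int d)*T-1)}. fA j a)
   = (\<Sum>j\<in>{c..l}. \<Sum>b\<in>{(10*j+int d)*T..(10*j+(int d+1))*T-1}. fB j b)
   + (\<Sum>j\<in>{c-1..l}. \<Sum>a\<in>{max lo ((10*j+(int d+1))*T)..min n ((10*(j+1)+int d)*T-1)}. fA j a)"
proof -
  have T10: "10*T > 0" using T by simp
  have lb: "(10*l + int d)*T \<le> n" "n \<le> (10*l + int d + 10)*T - 1"
  proof -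
    have "l*(10*T) \<le> n - int d*T" using div_ge_iff[OF T10, of l "n - int d*T"] l by simp
    thus "(10*l + int d)*T \<le> n" by (simp add: algebra_simps)
    have "n - int d*T \<le> (l+1)*(10*T) - 1" using div_le_iff2[OF T10, of "n - int d*T" l] l by simp
    thus "n \<le> (10*l + int d + 10)*T - 1" by (simp add: algebra_simps)
  qed
  have lhi: "l \<le> hi"
  proof -
    have "(10*l + int d)*T < (100*c)*T" using lb n2 by (simp add: algebra_simps)
    hence "10*l + int d < 100*c" using T by (simp add: mult_less_cancel_right)
    thus ?thesis using hi by simp
  qed
  define q where "q = n div T"
  have qb: "10*l + int d \<le> q" "q \<le> 10*l + int d + 9"
    using div_ge_iff[OF T, of "10*l + int d" n] div_le_iff2[OF T, of n "10*l + int d + 9"] lb unfolding q_def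
    by (simp_all add: algebra_simps)
  have qd: "q = 10*(q div 10) + q mod 10" by simp
  have bempty: "{(10*j+int d)*T..min n X} = {}" if "l + 1 \<le> j" for j X
  proof -
    have "(10*(l+1)+int d)*T \<le> (10*j+int d)*T" using that T by (intro mono_T) auto
    thus ?thesis using lb by (auto simp: algebra_simps)
  qed
  have B1: "(\<Sum>j\<in>{c..hi}. \<Sum>b\<in>{(10*j+int d)*T..min n ((10*j+(int d+1))*T-1)}. fB j b)
         = (\<Sum>j\<in>{c..l}. \<Sum>b\<in>{(10*j+int d)*T..min n ((10*j+(int d+1))*T-1)}. fB j b)"
  proof (rule sum.mono_neutral_right)
    show "finite {c..hi}" by simp
    show "{c..l} \<subseteq> {c..hi}" using lhi by auto
    show "\<forall>j\<in>{c..hi} - {c..l}. (\<Sum>b\<in>{(10*j+int d)*T..min n ((10*j+(int d+1))*T-1)}. fB j b) = 0"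
    proof
      fix j assume "j \<in> {c..hi} - {c..l}"
      hence "l + 1 \<le> j" by auto
      thus "(\<Sum>b\<in>{(10*j+int d)*T..min n ((10*j+(int d+1))*T-1)}. fB j b) = 0" by (subst bempty) simp_all
    qed
  qed
  have aempty: "{max lo ((10*j+(int d+1))*T)..min n X} = {}" if "(10*L+int d+1)*T > n" "L \<le> j" for L j X
  proof -
    have "(10*L+int d+1)*T \<le> (10*j+(int d+1))*T" using that T by (intro mono_T) auto
    thus ?thesis using that by auto
  qed
  show "n div T mod 10 = int d \<Longrightarrow> (\<Sum>j\<in>{c..hi}. \<Sum>b\<in>{(10*j+int d)*T..min n ((10*j+(int d+1))*T-1)}. fB j b) + (\<Sum>j\<in>{c-1..hi}. \<Sum>a\<in>{max lo ((10*j+(int d+1))*T)..min n ((10*(j+1)+int d)*T-1)}. fA j a) = (\<Sum>j\<in>{c..l}. \<Sum>b\<in>{(10*j+int d)*T..min n ((10*j+(int d+1))*T-1)}. fB j b) + (\<Sum>j\<in>{c-1..l-1}. \<Sum>a\<in>{max lo ((10*j+(int d+1))*T)..(10*(j+1)+int d)*T-1}. fA j a)"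
  proof -
    assume dg: "n div T mod 10 = int d"
    have "q = 10*(q div 10) + int d" using qd dg unfolding q_def by simp
    moreover have "q div 10 = l"
    proof -
      have "10*l \<le> 10*(q div 10)" "10*(q div 10) \<le> 10*l+9" using qb \<open>q = 10*(q div 10) + int d\<close> by linarith+
      thus ?thesis by presburger
    qed
    ultimately have "q \<le> 10*l + int d" by simp
    hence nb: "n \<le> (10*l + int d + 1)*T - 1" using div_le_iff2[OF T, of n "10*l + int d"] unfolding q_def by simp
    have A1: "(\<Sum>j\<in>{c-1..hi}. \<Sum>a\<in>{max lo ((10*j+(int d+1))*T)..min n ((10*(j+1)+int d)*T-1)}. fA j a) = (\<Sum>j\<in>{c-1..l-1}. \<Sum>a\<in>{max lo ((10*j+(int d+1))*T)..min n ((10*(j+1)+int d)*T-1)}. fA j a)"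
    proof (rule sum.mono_neutral_right)
      show "finite {c-1..hi}" by simp
      show "{c-1..l-1} \<subseteq> {c-1..hi}" using lhi by auto
      show "\<forall>j\<in>{c-1..hi} - {c-1..l-1}. (\<Sum>a\<in>{max lo ((10*j+(int d+1))*T)..min n ((10*(j+1)+int d)*T-1)}. fA j a) = 0"
      proof
        fix j assume "j \<in> {c-1..hi} - {c-1..l-1}"
        hence "l \<le> j" by auto
        moreover have "(10*l+int d+1)*T > n" using nb by (simp add: algebra_simps)
        ultimately show "(\<Sum>a\<in>{max lo ((10*j+(int d+1))*T)..min n ((10*(j+1)+int d)*T-1)}. fA j a) = 0"
          by (subst aempty[of l j]) simp_all
      qed
    qed
    have A2: "(\<Sum>j\<in>{c-1..l-1}. \<Sum>a\<in>{max lo ((10*j+(int d+1))*T)..min n ((10*(j+1)+int d)*T-1)}. fA j a) = (\<Sum>j\<in>{c-1..l-1}. \<Sum>a\<in>{max lo ((10*j+(int d+1))*T)..(10*(j+1)+int d)*T-1}. fA j a)"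
    proof (rule sum.cong[OF refl])
      fix j assume "j \<in> {c-1..l-1}"
      hence "(10*(j+1)+int d) \<le> 10*l + int d" by auto
      hence "(10*(j+1)+int d)*T \<le> (10*l + int d)*T" using T by (intro mono_T) auto
      hence "min n ((10*(j+1)+int d)*T-1) = (10*(j+1)+int d)*T-1" using lb by simp
      thus "(\<Sum>a\<in>{max lo ((10*j+(int d+1))*T)..min n ((10*(j+1)+int d)*T-1)}. fA j a) =
            (\<Sum>a\<in>{max lo ((10*j+(int d+1))*T)..(10*(j+1)+int d)*T-1}. fA j a)" by simp
    qed
    show ?thesis using B1 A1 A2 by simp
  qed
  show "n div T mod 10 \<noteq> int d \<Longrightarrow> (\<Sum>j\<in>{c..hi}. \<Sum>b\<in>{(10*j+int d)*T..min n ((10*j+(int d+1))*T-1)}. fB j b) + (\<Sum>j\<in>{c-1..hi}. \<Sum>a\<in>{max lo ((10*j+(int d+1))*T)..min n ((10*(j+1)+int d)*T-1)}. fA j a) = (\<Sum>j\<in>{c..l}. \<Sum>b\<in>{(10*j+int d)*T..(10*j+(int d+1))*T-1}. fB j b) + (\<Sum>j\<in>{c-1..l}. \<Sum>a\<in>{max lo ((10*j+(int d+1))*T)..min n ((10*(j+1)+int d)*T-1)}. fA j a)"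
  proof -
    assume dg: "n div T mod 10 \<noteq> int d"
    have "q \<noteq> 10*l + int d"
    proof
      assume "q = 10*l + int d"
      hence "q = int d + l*10" by simp
      hence "q mod 10 = int d mod 10" by simp
      also have "\<dots> = int d" using d by (intro mod_pos_pos_trivial) auto
      finally show False using dg unfolding q_def by simp
    qed
    hence "10*l + int d + 1 \<le> q" using qb by simp
    hence nb: "(10*l + int d + 1)*T \<le> n" using div_ge_iff[OF T, of "10*l + int d + 1" n] unfolding q_def by simp
    have B2: "(\<Sum>j\<in>{c..l}. \<Sum>b\<in>{(10*j+int d)*T..min n ((10*j+(int d+1))*T-1)}. fB j b) = (\<Sum>j\<in>{c..l}. \<Sum>b\<in>{(10*j+int d)*T..(10*j+(int d+1))*T-1}. fB j b)"
    proof (rule sum.cong[OF refl])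
      fix j assume "j \<in> {c..l}"
      hence "(10*j+(int d+1)) \<le> 10*l + int d + 1" by auto
      hence "(10*j+(int d+1))*T \<le> (10*l + int d + 1)*T" using T by (intro mono_T) auto
      hence "min n ((10*j+(int d+1))*T-1) = (10*j+(int d+1))*T-1" using nb by simp
      thus "(\<Sum>b\<in>{(10*j+int d)*T..min n ((10*j+(int d+1))*T-1)}. fB j b) =
            (\<Sum>b\<in>{(10*j+int d)*T..(10*j+(int d+1))*T-1}. fB j b)" by simp
    qed
    have A1: "(\<Sum>j\<in>{c-1..hi}. \<Sum>a\<in>{max lo ((10*j+(int d+1))*T)..min n ((10*(j+1)+int d)*T-1)}. fA j a) = (\<Sum>j\<in>{c-1..l}. \<Sum>a\<in>{max lo ((10*j+(int d+1))*T)..min n ((10*(j+1)+int d)*T-1)}. fA j a)"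
    proof (rule sum.mono_neutral_right)
      show "finite {c-1..hi}" by simp
      show "{c-1..l} \<subseteq> {c-1..hi}" using lhi by auto
      show "\<forall>j\<in>{c-1..hi} - {c-1..l}. (\<Sum>a\<in>{max lo ((10*j+(int d+1))*T)..min n ((10*(j+1)+int d)*T-1)}. fA j a) = 0"
      proof
        fix j assume "j \<in> {c-1..hi} - {c-1..l}"
        hence "l + 1 \<le> j" by auto
        moreover have "(10*(l+1)+int d+1)*T > n" using lb by (simp add: algebra_simps)
        ultimately show "(\<Sum>a\<in>{max lo ((10*j+(int d+1))*T)..min n ((10*(j+1)+int d)*T-1)}. fA j a) = 0"
          by (subst aempty[of "l+1" j]) simp_all
      qed
    qed
    show ?thesis using B1 B2 A1 by simp
  qed
qed

lemma Fb: fixes c T e j b :: int assumes T: "T > 0" and e: "0 \<le> e" "e \<le> 9"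
  and b: "(10*j+e)*T \<le> b" "b \<le> (10*j+(e+1))*T - 1"
  shows "Fc c T e b = b - ((9*j+e)*T + c - 1)"
proof -
  define q where "q = b div T"
  have q: "10*j+e \<le> q" "q \<le> 10*j+e"
    using div_ge_iff[OF T, of "10*j+e" b] div_le_iff2[OF T, of b "10*j+e"] b unfolding q_def
    by (simp_all add: algebra_simps)
  hence qq: "q mod 10 = e" "q div 10 = j" using pres1[OF e, of q j] by auto
  have r: "b mod T = b - q*T" unfolding q_def using div_mult_mod_eq[of b T] by linarith
  have qe: "q = 10*j+e" using q by simp
  have "Fc c T e b = j*T - c + (b - q*T + 1)" unfolding Fc_def q_def[symmetric] qq r by simp
  also have "\<dots> = b - ((9*j+e)*T + c - 1)" unfolding qe by (simp add: algebra_simps)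
  finally show ?thesis .
qed

lemma Fa: fixes c T e j b :: int assumes T: "T > 0" and e: "0 \<le> e" "e \<le> 9"
  and b: "(10*j+(e+1))*T \<le> b" "b \<le> (10*(j+1)+e)*T - 1"
  shows "Fc c T e b = T*(j+1) - c"
proof -
  define q where "q = b div T"
  have q: "10*j+e+1 \<le> q" "q \<le> 10*j+e+9"
    using div_ge_iff[OF T, of "10*j+e+1" b] div_le_iff2[OF T, of b "10*j+e+9"] b unfolding q_def
    by (simp_all add: algebra_simps)
  show ?thesis
  proof (cases "q \<le> 10*j+9")
    case True
    define r0 where "r0 = q - 10*j"
    have qq: "q = r0 + j*10" unfolding r0_def by simp
    have r0: "0 \<le> r0" "r0 < 10" using q True e unfolding r0_def by auto
    have "q div 10 = r0 div 10 + j" "q mod 10 = r0 mod 10" unfolding qq by simp_all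
    hence "q div 10 = j" "q mod 10 = r0" using r0 by (simp_all add: div_pos_pos_trivial mod_pos_pos_trivial)
    moreover have "r0 > e" using q unfolding r0_def by simp
    ultimately show ?thesis unfolding Fc_def q_def[symmetric] by (simp add: algebra_simps)
  next
    case False
    define r0 where "r0 = q - 10*j - 10"
    have qq: "q = r0 + (j+1)*10" unfolding r0_def by simp
    have r0: "0 \<le> r0" "r0 < 10" using q False e unfolding r0_def by auto
    have "q div 10 = r0 div 10 + (j+1)" "q mod 10 = r0 mod 10" unfolding qq by (simp, rule mod_mult_self1)
    hence "q div 10 = j+1" "q mod 10 = r0" using r0 by (simp_all add: div_pos_pos_trivial mod_pos_pos_trivial)
    moreover have "r0 < e" using q unfolding r0_def by simp
    ultimately show ?thesis unfolding Fc_def q_def[symmetric] by (simp add: algebra_simps)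
  qed
qed

lemma Ncount_int:
  assumes p: "p \<ge> 2" and d: "d \<le> 9" and x: "(10::int)^(p+t-1) \<le> x" "x \<le> 10^(p+t) - 1"
  shows "real (Ncount p d (nat x)) = real_of_int (Fc (10^(p-2)) (10^t) (int d) x)"
proof -
  have x0: "x \<ge> 0" using x(1) by (smt (verit) zero_le_power)
  have "int (10^(p+t-1)) \<le> x" using x(1) by simp
  hence "10^(p+t-1) \<le> nat x" using x0 by (simp only: le_nat_iff)
  moreover have "x < int (10^(p+t))" using x(2) by simp
  hence "nat x < (10::nat)^(p+t)" using x0 by (simp only: nat_less_iff)
  ultimately have "int (Ncount p d (nat x)) = Fc (10^(p-2)) (10^t) (int d) (int (nat x))"
    using Ncount_closed[OF p d] by blast
  hence "int (Ncount p d (nat x)) = Fc (10^(p-2)) (10^t) (int d) x" using x0 by simp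
  hence "real_of_int (int (Ncount p d (nat x))) = real_of_int (Fc (10^(p-2)) (10^t) (int d) x)" by simp
  thus ?thesis by simp
qed

lemma pow_facts: assumes p: "p \<ge> 2"
  shows "(10::int)^(p+t-1) = 10*10^(p-2)*10^t" "(10::int)^(p-1) = 10*10^(p-2)" "(10::int)^(p+t) = 100*10^(p-2)*10^t"
proof -
  have a: "p + t - 1 = Suc (p-2) + t" using p by simp
  show "(10::int)^(p+t-1) = 10*10^(p-2)*10^t" unfolding a by (simp add: power_add)
  have b: "p - 1 = Suc (p-2)" using p by simp
  show "(10::int)^(p-1) = 10*10^(p-2)" unfolding b by simp
  have c: "p + t = Suc (Suc (p-2)) + t" using p by simp
  show "(10::int)^(p+t) = 100*10^(p-2)*10^t" unfolding c by (simp add: power_add)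
qed

lemma level_expr:
  assumes p: "p \<ge> 2" and d: "d \<le> 9" and U: "(10::int)^(p+t-1) - 1 \<le> U" "U \<le> 10^(p+t) - 1"
  shows "(\<Sum>x\<in>{(10::int)^(p+t-1)..U}. real (Ncount p d (nat x)) / real_of_int (x + 1 - 10^(p-1))) =
   (\<Sum>j\<in>{(10::int)^(p-2)..10^(p-1)-1}. \<Sum>b\<in>{(10*j+int d)*10^t..min U ((10*j+(int d+1))*10^t-1)}.
       real_of_int (b - ((9*j+int d)*10^t + 10^(p-2) - 1)) / real_of_int (b+1-10^(p-1)))
 + (\<Sum>j\<in>{(10::int)^(p-2)-1..10^(p-1)-1}. \<Sum>a\<in>{max (10^(p+t-1)) ((10*j+(int d+1))*10^t)..min U ((10*(j+1)+int d)*10^t-1)}.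
       real_of_int (10^t*(j+1) - 10^(p-2)) / real_of_int (a+1-10^(p-1)))"
proof -
  define c :: int where "c = 10^(p-2)"
  define T :: int where "T = 10^t"
  have c0: "c > 0" and T0: "T > 0" unfolding c_def T_def by simp_all
  note pf = pow_facts(1,3)[OF p, of t, folded c_def T_def] pow_facts(2)[OF p, folded c_def]
  have U': "10*c*T - 1 \<le> U" "U \<le> 100*c*T - 1" using U unfolding pf by simp_all
  define g where "g x = real (Ncount p d (nat x)) / real_of_int (x + 1 - 10*c)" for x
  have gv: "g x = real_of_int (Fc c T (int d) x) / real_of_int (x + 1 - 10*c)"
    if "10*c*T \<le> x" "x \<le> 100*c*T - 1" for x
  proof -
    have "(10::int)^(p+t-1) \<le> x" "x \<le> 10^(p+t) - 1" unfolding pf using that by simp_all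
    from Ncount_int[OF p d this] have "real (Ncount p d (nat x)) = real_of_int (Fc c T (int d) x)"
      unfolding c_def T_def .
    thus ?thesis unfolding g_def by simp
  qed
  have ls: "sum g {10*c*T..U} =
     (\<Sum>j\<in>{c..10*c-1}. \<Sum>b\<in>{(10*j+int d)*T..min U ((10*j+(int d+1))*T-1)}. g b)
   + (\<Sum>j\<in>{c-1..10*c-1}. \<Sum>a\<in>{max (10*c*T) ((10*j+(int d+1))*T)..min U ((10*(j+1)+int d)*T-1)}. g a)"
    by (rule level_split[OF c0 T0 d U'])
  have B: "(\<Sum>j\<in>{c..10*c-1}. \<Sum>b\<in>{(10*j+int d)*T..min U ((10*j+(int d+1))*T-1)}. g b)
     = (\<Sum>j\<in>{c..10*c-1}. \<Sum>b\<in>{(10*j+int d)*T..min U ((10*j+(int d+1))*T-1)}.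
       real_of_int (b - ((9*j+int d)*T + c - 1)) / real_of_int (b+1-10*c))"
  proof (intro sum.cong refl)
    fix j b assume j: "j \<in> {c..10*c-1}" and b: "b \<in> {(10*j+int d)*T..min U ((10*j+(int d+1))*T-1)}"
    have "10*c*T \<le> (10*j+int d)*T" using j T0 by (intro mono_T) auto
    moreover have "(10*j+int d)*T \<le> b" "b \<le> U" using b by simp_all
    ultimately have lv: "10*c*T \<le> b" "b \<le> 100*c*T - 1" using U' by linarith+
    have bb: "(10*j+int d)*T \<le> b" "b \<le> (10*j+(int d+1))*T - 1" using b by simp_all
    have Fe: "Fc c T (int d) b = b - ((9*j+int d)*T + c - 1)" using d by (intro Fb[OF T0 _ _ bb]) simp_all
    show "g b = real_of_int (b - ((9*j+int d)*T + c - 1)) / real_of_int (b+1-10*c)"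
      by (simp only: gv[OF lv] Fe)
  qed
  have A: "(\<Sum>j\<in>{c-1..10*c-1}. \<Sum>a\<in>{max (10*c*T) ((10*j+(int d+1))*T)..min U ((10*(j+1)+int d)*T-1)}. g a)
     = (\<Sum>j\<in>{c-1..10*c-1}. \<Sum>a\<in>{max (10*c*T) ((10*j+(int d+1))*T)..min U ((10*(j+1)+int d)*T-1)}.
       real_of_int (T*(j+1) - c) / real_of_int (a+1-10*c))"
  proof (intro sum.cong refl)
    fix j a assume a: "a \<in> {max (10*c*T) ((10*j+(int d+1))*T)..min U ((10*(j+1)+int d)*T-1)}"
    hence "10*c*T \<le> a" "a \<le> U" by simp_all
    hence lv: "10*c*T \<le> a" "a \<le> 100*c*T - 1" using U' by linarith+
    have aa: "(10*j+(int d+1))*T \<le> a" "a \<le> (10*(j+1)+int d)*T - 1" using a by simp_all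
    have Fe: "Fc c T (int d) a = T*(j+1) - c" using d by (intro Fa[OF T0 _ _ aa]) simp_all
    show "g a = real_of_int (T*(j+1) - c) / real_of_int (a+1-10*c)"
      by (simp only: gv[OF lv] Fe)
  qed
  have final: "sum g {10*c*T..U} =
     (\<Sum>j\<in>{c..10*c-1}. \<Sum>b\<in>{(10*j+int d)*T..min U ((10*j+(int d+1))*T-1)}.
       real_of_int (b - ((9*j+int d)*T + c - 1)) / real_of_int (b+1-10*c))
   + (\<Sum>j\<in>{c-1..10*c-1}. \<Sum>a\<in>{max (10*c*T) ((10*j+(int d+1))*T)..min U ((10*(j+1)+int d)*T-1)}.
       real_of_int (T*(j+1) - c) / real_of_int (a+1-10*c))"
    using ls unfolding B A .
  show ?thesis
    unfolding pf c_def[symmetric] T_def[symmetric]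
    using final unfolding g_def .
qed

lemma sum_split_int: fixes g :: "int \<Rightarrow> real" assumes "a \<le> b + 1" "b \<le> N"
  shows "sum g {a..N} = sum g {a..b} + sum g {b+1..N}"
proof -
  have "{a..N} = {a..b} \<union> {b+1..N}" using assms by auto
  moreover have "{a..b} \<inter> {b+1..N} = {}" by auto
  ultimately show ?thesis by (simp add: sum.union_disjoint)
qed

lemma levels: fixes g :: "int \<Rightarrow> real" assumes p: "p \<ge> 2"
  shows "(10::int)^(p+K-1) - 1 \<le> N \<Longrightarrow> sum g {10^(p-1)..N} =
     (\<Sum>t<K. sum g {(10::int)^(p+t-1)..10^(p+t)-1}) + sum g {10^(p+K-1)..N}"
proof (induction K)
  case 0 thus ?case by simp
next
  case (Suc K)
  have e: "p + Suc K - 1 = p + K" using p by simp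
  have m: "(10::int)^(p+K-1) \<le> 10^(p+K)" by (rule power_increasing) auto
  have "(10::int)^(p+K) - 1 \<le> N" using Suc.prems e by simp
  hence "(10::int)^(p+K-1) - 1 \<le> N" using m by linarith
  note IH = Suc.IH[OF this]
  have "sum g {10^(p+K-1)..N} = sum g {(10::int)^(p+K-1)..10^(p+K)-1} + sum g {10^(p+K)-1+1..N}"
    by (rule sum_split_int) (use m Suc.prems e in auto)
  thus ?case using IH unfolding e by simp
qed

lemma kfacts:
  fixes p n :: nat and k :: int
  assumes hp: "p \<ge> 2" and hn: "n \<ge> 10 ^ (p - 1)"
    and hk: "k = (if \<exists>i::nat. 10 ^ (i + p) \<le> n
                  then int (Max {i::nat. 10 ^ (i + p) \<le> n}) else -1)"
  shows "k \<ge> -1" "10^(p + nat (k+1) - 1) \<le> n" "n < 10^(p + nat (k+1))"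
proof -
  have "k \<ge> -1 \<and> 10^(p + nat (k+1) - 1) \<le> n \<and> n < 10^(p + nat (k+1))"
  proof (cases "\<exists>i::nat. 10 ^ (i + p) \<le> n")
    case True
    define S where "S = {i::nat. 10 ^ (i + p) \<le> n}"
    have fin: "finite S"
    proof (rule finite_subset[of _ "{..n}"])
      show "S \<subseteq> {..n}"
      proof
        fix i assume "i \<in> S"
        hence h1: "10 ^ (i + p) \<le> n" unfolding S_def by simp
        have h2: "i < 2^i" by simp
        have h3: "(2::nat)^i \<le> 10^i" by (rule power_mono) auto
        have h4: "(10::nat)^i \<le> 10^(i+p)" by (rule power_increasing) auto
        from h1 h2 h3 h4 have "i \<le> n" by linarith
        thus "i \<in> {..n}" by simp
      qed
    qed simp
    have ne: "S \<noteq> {}" using True unfolding S_def by auto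
    define M where "M = Max S"
    have M: "10^(M+p) \<le> n" using Max_in[OF fin ne] unfolding M_def S_def by simp
    have M1: "\<not> 10^(Suc M + p) \<le> n"
    proof
      assume "10^(Suc M + p) \<le> n"
      hence "Suc M \<in> S" unfolding S_def by simp
      hence "Suc M \<le> M" unfolding M_def using Max_ge[OF fin] by blast
      thus False by simp
    qed
    have kM: "k = int M" using hk True unfolding M_def S_def by simp
    have "nat (k+1) = Suc M" using kM by simp
    moreover have "p + Suc M - 1 = M + p" using hp by simp
    ultimately show ?thesis using M M1 kM by (simp add: add.commute)
  next
    case False
    hence "k = -1" using hk by simp
    moreover have "\<not> 10^(0 + p) \<le> n" using False by blast
    ultimately show ?thesis using hn by simp
  qed
  thus "k \<ge> -1" "10^(p + nat (k+1) - 1) \<le> n" "n < 10^(p + nat (k+1))" by simp_all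
qed

lemma full_level:
  assumes p: "p \<ge> 2" and d: "d \<le> 9"
  shows "(\<Sum>x\<in>{(10::int)^(p+t-1)..10^(p+t)-1}. real (Ncount p d (nat x)) / real_of_int (x + 1 - 10^(p-1))) =
   (\<Sum>j\<in>{(10::int)^(p-2)..10^(p-1)-1}. \<Sum>b\<in>{(10*j+int d)*10^t..(10*j+(int d+1))*10^t-1}.
       real_of_int (b - ((9*j+int d)*10^t + 10^(p-2) - 1)) / real_of_int (b+1-10^(p-1)))
 + (\<Sum>j\<in>{(10::int)^(p-2)-1..10^(p-1)-1}. \<Sum>a\<in>{max (10^(p+t-1)) ((10*j+(int d+1))*10^t)..min (10^(p+t)-1) ((10*(j+1)+int d)*10^t-1)}.
       real_of_int (10^t*(j+1) - 10^(p-2)) / real_of_int (a+1-10^(p-1)))"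
proof -
  have m: "(10::int)^(p+t-1) \<le> 10^(p+t)" by (rule power_increasing) auto
  have le: "(10::int)^(p+t-1) - 1 \<le> 10^(p+t)-1" "(10::int)^(p+t)-1 \<le> 10^(p+t)-1" using m by linarith+
  note E = level_expr[OF p d le]
  have B: "(\<Sum>j\<in>{(10::int)^(p-2)..10^(p-1)-1}. \<Sum>b\<in>{(10*j+int d)*10^t..min (10^(p+t)-1) ((10*j+(int d+1))*10^t-1)}.
       real_of_int (b - ((9*j+int d)*10^t + 10^(p-2) - 1)) / real_of_int (b+1-10^(p-1)))
     = (\<Sum>j\<in>{(10::int)^(p-2)..10^(p-1)-1}. \<Sum>b\<in>{(10*j+int d)*10^t..(10*j+(int d+1))*10^t-1}.
       real_of_int (b - ((9*j+int d)*10^t + 10^(p-2) - 1)) / real_of_int (b+1-10^(p-1)))"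
  proof (rule sum.cong[OF refl])
    fix j assume j: "j \<in> {(10::int)^(p-2)..10^(p-1)-1}"
    have "10*j + (int d+1) \<le> 10*10^(p-1)" using j d by auto
    hence "(10*j + (int d+1))*10^t \<le> 10*10^(p-1)*(10::int)^t" by (intro mono_T) auto
    also have "10*10^(p-1)*(10::int)^t = 10^(p+t)" using pow_facts(1,3)[OF p, of t] pow_facts(2)[OF p] by simp
    finally have "min (10^(p+t)-1) ((10*j+(int d+1))*10^t-1) = (10*j+(int d+1))*(10::int)^t-1" by simp
    thus "(\<Sum>b\<in>{(10*j+int d)*10^t..min (10^(p+t)-1) ((10*j+(int d+1))*10^t-1)}.
       real_of_int (b - ((9*j+int d)*10^t + 10^(p-2) - 1)) / real_of_int (b+1-10^(p-1))) =
       (\<Sum>b\<in>{(10*j+int d)*10^t..(10*j+(int d+1))*10^t-1}.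
       real_of_int (b - ((9*j+int d)*10^t + 10^(p-2) - 1)) / real_of_int (b+1-10^(p-1)))" by simp
  qed
  show ?thesis using E unfolding B .
qed

theorem proposition1:
  fixes p d n :: nat and k l :: int
  assumes hp: "p \<ge> 2" and hd: "d \<le> 9" and hn: "n \<ge> 10 ^ (p - 1)"
    and hk: "k = (if \<exists>i::nat. 10 ^ (i + p) \<le> n
                  then int (Max {i::nat. 10 ^ (i + p) \<le> n}) else -1)"
    and hl: "l = \<lfloor>real_of_int (int n - (10 ^ (p - 1) + int d) * 10 ^ nat (k + 1))
                    / real_of_int (10 ^ nat (k + 2))\<rfloor> + 10 ^ (p - 2)"
  shows "Pprob d n p = (1 / (real n + 1 - 10 ^ (p - 1))) *
    ((\<Sum>i\<in>{0..k}.
        (\<Sum>j\<in>{(10::int) ^ (p - 2)..10 ^ (p - 1) - 1}.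
           \<Sum>b\<in>{(10 * j + int d) * 10 ^ nat i..(10 * j + (int d + 1)) * 10 ^ nat i - 1}.
             real_of_int (b - ((9 * j + int d) * 10 ^ nat i + 10 ^ (p - 2) - 1))
             / real_of_int (b + 1 - 10 ^ (p - 1)))
      + (\<Sum>j\<in>{(10::int) ^ (p - 2) - 1..10 ^ (p - 1) - 1}.
           \<Sum>a\<in>{max (10 ^ (p + nat i - 1)) ((10 * j + (int d + 1)) * 10 ^ nat i)
                 ..min (10 ^ (p + nat i) - 1) ((10 * (j + 1) + int d) * 10 ^ nat i - 1)}.
             real_of_int (10 ^ nat i * (j + 1) - 10 ^ (p - 2))
             / real_of_int (a + 1 - 10 ^ (p - 1))))
     + (if pth_digit p n = d then
          (\<Sum>j\<in>{(10::int) ^ (p - 2)..l}.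
             \<Sum>b\<in>{(10 * j + int d) * 10 ^ nat (k + 1)
                   ..min (int n) ((10 * j + (int d + 1)) * 10 ^ nat (k + 1) - 1)}.
               real_of_int (b - ((9 * j + int d) * 10 ^ nat (k + 1) + 10 ^ (p - 2) - 1))
               / real_of_int (b + 1 - 10 ^ (p - 1)))
        + (\<Sum>j\<in>{(10::int) ^ (p - 2) - 1..l - 1}.
             \<Sum>a\<in>{max (10 ^ (p + nat (k + 1) - 1)) ((10 * j + (int d + 1)) * 10 ^ nat (k + 1))
                   ..(10 * (j + 1) + int d) * 10 ^ nat (k + 1) - 1}.
               real_of_int (10 ^ nat (k + 1) * (j + 1) - 10 ^ (p - 2))
               / real_of_int (a + 1 - 10 ^ (p - 1)))
        else
          (\<Sum>j\<in>{(10::int) ^ (p - 2)..l}.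
             \<Sum>b\<in>{(10 * j + int d) * 10 ^ nat (k + 1)
                   ..(10 * j + (int d + 1)) * 10 ^ nat (k + 1) - 1}.
               real_of_int (b - ((9 * j + int d) * 10 ^ nat (k + 1) + 10 ^ (p - 2) - 1))
               / real_of_int (b + 1 - 10 ^ (p - 1)))
        + (\<Sum>j\<in>{(10::int) ^ (p - 2) - 1..l}.
             \<Sum>a\<in>{max (10 ^ (p + nat (k + 1) - 1)) ((10 * j + (int d + 1)) * 10 ^ nat (k + 1))
                   ..min (int n) ((10 * (j + 1) + int d) * 10 ^ nat (k + 1) - 1)}.
               real_of_int (10 ^ nat (k + 1) * (j + 1) - 10 ^ (p - 2))
               / real_of_int (a + 1 - 10 ^ (p - 1)))))"
proof -
  have kf: "k \<ge> -1" "10^(p + nat (k+1) - 1) \<le> n" "n < 10^(p + nat (k+1))"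
    using kfacts[OF hp hn hk] by simp_all
  define g where "g x = real (Ncount p d (nat x)) / real_of_int (x + 1 - 10^(p-1))" for x
  have lhs: "(\<Sum>m = 10 ^ (p - 1)..n. real (Ncount p d m) / (real m + 1 - 10 ^ (p - 1)))
      = sum g {(10::int)^(p-1)..int n}"
  proof -
    have im: "{(10::int)^(p-1)..int n} = int ` {10^(p-1)..n}" by (simp add: image_int_atLeastAtMost)
    have "sum g (int ` {10^(p-1)..n}) = sum (g \<circ> int) {10^(p-1)..n}" by (rule sum.reindex) simp
    moreover have "(g \<circ> int) m = real (Ncount p d m) / (real m + 1 - 10 ^ (p - 1))" for m
      unfolding g_def by simp
    ultimately show ?thesis unfolding im by simp
  qed
  have lv: "sum g {(10::int)^(p-1)..int n} =
     (\<Sum>t<nat (k+1). sum g {(10::int)^(p+t-1)..10^(p+t)-1}) + sum g {10^(p+nat (k+1)-1)..int n}"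
  proof (rule levels[OF hp])
    have "int (10^(p + nat (k+1) - 1)) \<le> int n" using kf(2) by simp
    hence "(10::int)^(p + nat (k+1) - 1) \<le> int n" by (simp only: of_nat_power of_nat_numeral)
    thus "(10::int)^(p+nat (k+1)-1) - 1 \<le> int n" by linarith
  qed
  have fullsum: "(\<Sum>t<nat (k+1). sum g {(10::int)^(p+t-1)..10^(p+t)-1}) = (\<Sum>i\<in>{0..k}.
        (\<Sum>j\<in>{(10::int) ^ (p - 2)..10 ^ (p - 1) - 1}.
           \<Sum>b\<in>{(10 * j + int d) * 10 ^ nat i..(10 * j + (int d + 1)) * 10 ^ nat i - 1}.
             real_of_int (b - ((9 * j + int d) * 10 ^ nat i + 10 ^ (p - 2) - 1))
             / real_of_int (b + 1 - 10 ^ (p - 1)))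
      + (\<Sum>j\<in>{(10::int) ^ (p - 2) - 1..10 ^ (p - 1) - 1}.
           \<Sum>a\<in>{max (10 ^ (p + nat i - 1)) ((10 * j + (int d + 1)) * 10 ^ nat i)
                 ..min (10 ^ (p + nat i) - 1) ((10 * (j + 1) + int d) * 10 ^ nat i - 1)}.
             real_of_int (10 ^ nat i * (j + 1) - 10 ^ (p - 2))
             / real_of_int (a + 1 - 10 ^ (p - 1))))"
  proof -
    have im: "int ` {..<nat (k+1)} = {0..k}"
    proof -
      have "{..<nat(k+1)} = {0..<nat(k+1)}" by auto
      hence "int ` {..<nat(k+1)} = {0..<int (nat(k+1))}" by (simp add: image_int_atLeastLessThan)
      moreover have "int (nat (k+1)) = k+1" using kf(1) by simp
      moreover have "{0..<k+1} = {0..k}" by auto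
      ultimately show ?thesis by simp
    qed
    show ?thesis unfolding im[symmetric] g_def
      by (subst sum.reindex, simp, rule sum.cong[OF refl], simp only: comp_def nat_int full_level[OF hp hd])
  qed
  have le0: "(10::int)^(p+nat (k+1)-1) \<le> int n"
  proof -
    have "int (10^(p + nat (k+1) - 1)) \<le> int n" using kf(2) by simp
    thus "(10::int)^(p + nat (k+1) - 1) \<le> int n" by (simp only: of_nat_power of_nat_numeral)
  qed
  have le1: "(10::int)^(p+nat (k+1)-1) - 1 \<le> int n" using le0 by linarith
  have le2: "int n \<le> (10::int)^(p+nat (k+1)) - 1"
  proof -
    have "int n < int (10^(p + nat (k+1)))" using kf(3) by simp
    hence "int n < (10::int)^(p + nat (k+1))" by (simp only: of_nat_power of_nat_numeral)
    thus ?thesis by linarith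
  qed
  note E = level_expr[OF hp hd le1 le2]
  note pf = pow_facts(1,3)[OF hp, of "nat (k+1)"] pow_facts(2)[OF hp]
  have c0: "(10::int)^(p-2) > 0" and T0: "(10::int)^nat (k+1) > 0" by simp_all
  have lo: "(10::int)^(p+nat (k+1)-1) = 10*10^(p-2)*10^nat (k+1)" using pf by simp
  have hi: "(10::int)^(p-1)-1 = 10*10^(p-2) - 1" using pf by simp
  have n1: "10*10^(p-2)*10^nat (k+1) \<le> int n" using le0 lo by linarith
  have n2: "int n \<le> 100*10^(p-2)*10^nat (k+1) - 1" using le2 pf by simp
  have lval: "l = (int n - int d * 10^nat (k+1)) div (10 * 10^nat (k+1))"
  proof -
    have e1: "nat (k+2) = Suc (nat (k+1))" using kf(1) by simp
    have "l = (int n - (10 ^ (p - 1) + int d) * 10 ^ nat (k + 1)) div 10 ^ nat (k + 2) + 10 ^ (p - 2)"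
      using hl by (simp only: floor_divide_of_int_eq)
    also have "(int n - (10 ^ (p - 1) + int d) * 10 ^ nat (k + 1)) =
        (int n - int d * 10^nat (k+1)) + (- (10^(p-2))) * (10 * 10^nat (k+1))"
      using pf by (simp add: algebra_simps)
    also have "(10::int) ^ nat (k + 2) = 10 * 10^nat (k+1)" unfolding e1 by simp
    also have "((int n - int d * 10^nat (k+1)) + (- (10^(p-2))) * (10 * 10^nat (k+1))) div (10 * 10^nat (k+1))
        = - (10^(p-2)) + (int n - int d * 10^nat (k+1)) div (10 * 10^nat (k+1))"
      by (rule div_mult_self1) simp
    finally show ?thesis by simp
  qed
  have dig: "(pth_digit p n = d) = (int n div 10^nat (k+1) mod 10 = int d)"
  proof -
    have "pth_digit p n = n div 10^nat (k+1) mod 10" using pth_level[of p "nat (k+1)" n] hp kf by simp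
    hence "int (pth_digit p n) = int n div 10^nat (k+1) mod 10" by (simp add: of_nat_div of_nat_mod)
    thus ?thesis by linarith
  qed
  have part: "sum g {10^(p+nat (k+1)-1)..int n} = (if pth_digit p n = d then
          (\<Sum>j\<in>{(10::int) ^ (p - 2)..l}.
             \<Sum>b\<in>{(10 * j + int d) * 10 ^ nat (k + 1)
                   ..min (int n) ((10 * j + (int d + 1)) * 10 ^ nat (k + 1) - 1)}.
               real_of_int (b - ((9 * j + int d) * 10 ^ nat (k + 1) + 10 ^ (p - 2) - 1))
               / real_of_int (b + 1 - 10 ^ (p - 1)))
        + (\<Sum>j\<in>{(10::int) ^ (p - 2) - 1..l - 1}.
             \<Sum>a\<in>{max (10 ^ (p + nat (k + 1) - 1)) ((10 * j + (int d + 1)) * 10 ^ nat (k + 1))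
                   ..(10 * (j + 1) + int d) * 10 ^ nat (k + 1) - 1}.
               real_of_int (10 ^ nat (k + 1) * (j + 1) - 10 ^ (p - 2))
               / real_of_int (a + 1 - 10 ^ (p - 1)))
        else
          (\<Sum>j\<in>{(10::int) ^ (p - 2)..l}.
             \<Sum>b\<in>{(10 * j + int d) * 10 ^ nat (k + 1)
                   ..(10 * j + (int d + 1)) * 10 ^ nat (k + 1) - 1}.
               real_of_int (b - ((9 * j + int d) * 10 ^ nat (k + 1) + 10 ^ (p - 2) - 1))
               / real_of_int (b + 1 - 10 ^ (p - 1)))
        + (\<Sum>j\<in>{(10::int) ^ (p - 2) - 1..l}.
             \<Sum>a\<in>{max (10 ^ (p + nat (k + 1) - 1)) ((10 * j + (int d + 1)) * 10 ^ nat (k + 1))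
                   ..min (int n) ((10 * (j + 1) + int d) * 10 ^ nat (k + 1) - 1)}.
               real_of_int (10 ^ nat (k + 1) * (j + 1) - 10 ^ (p - 2))
               / real_of_int (a + 1 - 10 ^ (p - 1))))"
  proof (cases "pth_digit p n = d")
    case True
    show ?thesis unfolding g_def E if_P[OF True]
      by (rule range_lemma(1)[OF c0 T0 hd lo hi n1 n2 lval]) (use True dig in simp)
  next
    case False
    show ?thesis unfolding g_def E if_not_P[OF False]
      by (rule range_lemma(2)[OF c0 T0 hd lo hi n1 n2 lval]) (use False dig in simp)
  qed
  have main: "(\<Sum>m = 10 ^ (p - 1)..n. real (Ncount p d m) / (real m + 1 - 10 ^ (p - 1))) = ((\<Sum>i\<in>{0..k}.
        (\<Sum>j\<in>{(10::int) ^ (p - 2)..10 ^ (p - 1) - 1}.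
           \<Sum>b\<in>{(10 * j + int d) * 10 ^ nat i..(10 * j + (int d + 1)) * 10 ^ nat i - 1}.
             real_of_int (b - ((9 * j + int d) * 10 ^ nat i + 10 ^ (p - 2) - 1))
             / real_of_int (b + 1 - 10 ^ (p - 1)))
      + (\<Sum>j\<in>{(10::int) ^ (p - 2) - 1..10 ^ (p - 1) - 1}.
           \<Sum>a\<in>{max (10 ^ (p + nat i - 1)) ((10 * j + (int d + 1)) * 10 ^ nat i)
                 ..min (10 ^ (p + nat i) - 1) ((10 * (j + 1) + int d) * 10 ^ nat i - 1)}.
             real_of_int (10 ^ nat i * (j + 1) - 10 ^ (p - 2))
             / real_of_int (a + 1 - 10 ^ (p - 1))))
     + (if pth_digit p n = d then
          (\<Sum>j\<in>{(10::int) ^ (p - 2)..l}.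
             \<Sum>b\<in>{(10 * j + int d) * 10 ^ nat (k + 1)
                   ..min (int n) ((10 * j + (int d + 1)) * 10 ^ nat (k + 1) - 1)}.
               real_of_int (b - ((9 * j + int d) * 10 ^ nat (k + 1) + 10 ^ (p - 2) - 1))
               / real_of_int (b + 1 - 10 ^ (p - 1)))
        + (\<Sum>j\<in>{(10::int) ^ (p - 2) - 1..l - 1}.
             \<Sum>a\<in>{max (10 ^ (p + nat (k + 1) - 1)) ((10 * j + (int d + 1)) * 10 ^ nat (k + 1))
                   ..(10 * (j + 1) + int d) * 10 ^ nat (k + 1) - 1}.
               real_of_int (10 ^ nat (k + 1) * (j + 1) - 10 ^ (p - 2))
               / real_of_int (a + 1 - 10 ^ (p - 1)))
        else
          (\<Sum>j\<in>{(10::int) ^ (p - 2)..l}.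
             \<Sum>b\<in>{(10 * j + int d) * 10 ^ nat (k + 1)
                   ..(10 * j + (int d + 1)) * 10 ^ nat (k + 1) - 1}.
               real_of_int (b - ((9 * j + int d) * 10 ^ nat (k + 1) + 10 ^ (p - 2) - 1))
               / real_of_int (b + 1 - 10 ^ (p - 1)))
        + (\<Sum>j\<in>{(10::int) ^ (p - 2) - 1..l}.
             \<Sum>a\<in>{max (10 ^ (p + nat (k + 1) - 1)) ((10 * j + (int d + 1)) * 10 ^ nat (k + 1))
                   ..min (int n) ((10 * (j + 1) + int d) * 10 ^ nat (k + 1) - 1)}.
               real_of_int (10 ^ nat (k + 1) * (j + 1) - 10 ^ (p - 2))
               / real_of_int (a + 1 - 10 ^ (p - 1)))))"
    unfolding lhs lv fullsum part ..
  show ?thesis unfolding Pprob_def main ..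
qed

end
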